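(* Let $G$ be a torsion-free group, $\mathbb{F}$ a field, $\mathsf{a}$ a unit in $\mathbb{F}[G]$ with $supp(\mathsf{a})=\{1,x,y,xy\}$ where $x,y$ are distinct non-trivial elements of $G$, and let $\mathsf{b}$ be a mate of $\mathsf{a}$. Then $|supp(\mathsf{a})supp(\mathsf{b})|\le 2|supp(\mathsf{b})|-1$.
   Context: $supp(\gamma)=\{x\in G:\gamma_x\ne0\}$; for subsets $B,C\subseteq G$, $BC=\{bc:b\in B,c\in C\}$. A mate of $\mathsf{a}$ is an element $\mathsf{b}$ with $\mathsf{a}\mathsf{b}=1$ such that $|supp(\mathsf{b})|\le|supp(\mathsf{b}')|$ for every $\mathsf{b}'$ with $\mathsf{a}\mathsf{b}'=1$. *)

theory Defs
  imports "HOL-Algebra.Coset"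
begin

definition grp_ring :: "('g, 'm) monoid_scheme \<Rightarrow> ('g \<Rightarrow> 'f::field) set" where
  "grp_ring G = {\<gamma>. (\<forall>z. z \<notin> carrier G \<longrightarrow> \<gamma> z = 0) \<and> finite {z. \<gamma> z \<noteq> 0}}"

definition supp :: "('g, 'm) monoid_scheme \<Rightarrow> ('g \<Rightarrow> 'f::field) \<Rightarrow> 'g set" where
  "supp G \<gamma> = {z \<in> carrier G. \<gamma> z \<noteq> 0}"

definition gr_one :: "('g, 'm) monoid_scheme \<Rightarrow> 'g \<Rightarrow> 'f::field" where
  "gr_one G = (\<lambda>z. if z = \<one>\<^bsub>G\<^esub> then 1 else 0)"

definition gr_mult :: "('g, 'm) monoid_scheme \<Rightarrow> ('g \<Rightarrow> 'f::field) \<Rightarrow> ('g \<Rightarrow> 'f) \<Rightarrow> 'g \<Rightarrow> 'f" where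
  "gr_mult G \<alpha> \<beta> = (\<lambda>z. if z \<in> carrier G
      then (\<Sum>u\<in>supp G \<alpha>. \<alpha> u * \<beta> (inv\<^bsub>G\<^esub> u \<otimes>\<^bsub>G\<^esub> z)) else 0)"

definition gr_unit :: "('g, 'm) monoid_scheme \<Rightarrow> ('g \<Rightarrow> 'f::field) \<Rightarrow> bool" where
  "gr_unit G \<alpha> \<longleftrightarrow> \<alpha> \<in> grp_ring G \<and>
     (\<exists>\<beta>\<in>grp_ring G. gr_mult G \<alpha> \<beta> = gr_one G \<and> gr_mult G \<beta> \<alpha> = gr_one G)"

definition is_mate :: "('g, 'm) monoid_scheme \<Rightarrow> ('g \<Rightarrow> 'f::field) \<Rightarrow> ('g \<Rightarrow> 'f) \<Rightarrow> bool" where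
  "is_mate G \<alpha> \<beta> \<longleftrightarrow> \<beta> \<in> grp_ring G \<and> gr_mult G \<alpha> \<beta> = gr_one G \<and>
     (\<forall>\<beta>'\<in>grp_ring G. gr_mult G \<alpha> \<beta>' = gr_one G \<longrightarrow> card (supp G \<beta>) \<le> card (supp G \<beta>'))"

definition torsion_free :: "('g, 'm) monoid_scheme \<Rightarrow> bool" where
  "torsion_free G \<longleftrightarrow> (\<forall>x\<in>carrier G. \<forall>n::nat. n > 0 \<longrightarrow> x [^]\<^bsub>G\<^esub> n = \<one>\<^bsub>G\<^esub> \<longrightarrow> x = \<one>\<^bsub>G\<^esub>)"

end

theory Submission
  imports Defs "HOL-Library.Infinite_Set"
begin


context group begin

lemma lcan: "x \<in> carrier G \<Longrightarrow> y \<in> carrier G \<Longrightarrow> z \<in> carrier G \<Longrightarrow> x \<otimes> y = x \<otimes> z \<Longrightarrow> y = z"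
  by (metis inv_closed m_assoc l_inv l_one)

lemma tf_pow_inj:
  assumes tf: "torsion_free G" and z: "z \<in> carrier G" "z \<noteq> \<one>"
    and eq: "z [^] (i::nat) = z [^] (j::nat)"
  shows "i = j"
proof (rule ccontr)
  assume ne: "i \<noteq> j"
  have key: "\<And>i j. i < j \<Longrightarrow> z [^] (i::nat) = z [^] (j::nat) \<Longrightarrow> False"
  proof -
    fix i j :: nat assume ij: "i < j" and e: "z [^] i = z [^] j"
    have "z [^] j = z [^] i \<otimes> z [^] (j - i)" using ij z by (simp add: nat_pow_mult)
    hence "z [^] i \<otimes> z [^] (j - i) = z [^] i" using e by simp
    hence "z [^] (j - i) = \<one>" using z by simp
    thus False using tf z ij unfolding torsion_free_def by auto
  qed
  show False using ne eq key[of i j] key[of j i] by (cases "i < j") auto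
qed

lemma tf_inv_ne_one:
  assumes z: "z \<in> carrier G" "z \<noteq> \<one>" shows "inv z \<noteq> \<one>"
  using z by (metis inv_inv inv_one)

lemma tf_translate:
  assumes tf: "torsion_free G" and S: "finite S" "S \<subseteq> carrier G" "s \<in> S"
    and z: "z \<in> carrier G" and cl: "\<And>t. t \<in> S \<Longrightarrow> z \<otimes> t \<in> S"
  shows "z = \<one>"
proof (rule ccontr)
  assume nz: "z \<noteq> \<one>"
  have s: "s \<in> carrier G" using S by auto
  have mem: "z [^] n \<otimes> s \<in> S" for n :: nat
  proof (induction n)
    case 0 then show ?case using S s by simp
  next
    case (Suc n)
    have "z [^] Suc n \<otimes> s = z \<otimes> (z [^] n \<otimes> s)" using z s by (metis nat_pow_Suc2 m_assoc nat_pow_closed)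
    then show ?case using cl Suc by simp
  qed
  have "inj (\<lambda>n::nat. z [^] n \<otimes> s)"
  proof (rule injI)
    fix m n :: nat assume "z [^] m \<otimes> s = z [^] n \<otimes> s"
    hence "z [^] m = z [^] n" using z s by simp
    thus "m = n" using tf_pow_inj[OF tf z nz] by blast
  qed
  hence "infinite (range (\<lambda>n::nat. z [^] n \<otimes> s))" by (rule range_inj_infinite)
  moreover have "range (\<lambda>n::nat. z [^] n \<otimes> s) \<subseteq> S" using mem by auto
  ultimately show False using S finite_subset by blast
qed

lemma tf_walk:
  assumes tf: "torsion_free G" and S: "finite S" "S \<subseteq> carrier G" "w \<in> S"
    and x: "x \<in> carrier G" "x \<noteq> \<one>"
    and cl: "\<And>s. s \<in> S \<Longrightarrow> s \<noteq> w \<Longrightarrow> x \<otimes> s \<in> S"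
  shows "\<exists>k::nat. S = {inv x [^] (i::nat) \<otimes> w | i. i < k}"
proof -
  let ?z = "inv x"
  have z: "?z \<in> carrier G" "?z \<noteq> \<one>" using x tf_inv_ne_one by auto
  have w: "w \<in> carrier G" using S by auto
  have ex: "\<exists>n::nat. ?z [^] n \<otimes> w \<notin> S"
  proof (rule ccontr)
    assume "\<not> ?thesis"
    hence "range (\<lambda>n::nat. ?z [^] n \<otimes> w) \<subseteq> S" by auto
    moreover have "inj (\<lambda>n::nat. ?z [^] n \<otimes> w)"
    proof (rule injI)
      fix m n :: nat assume "?z [^] m \<otimes> w = ?z [^] n \<otimes> w"
      hence "?z [^] m = ?z [^] n" using z w by simp
      thus "m = n" using tf_pow_inj[OF tf z] by blast
    qed
    hence "infinite (range (\<lambda>n::nat. ?z [^] n \<otimes> w))" by (rule range_inj_infinite)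
    ultimately show False using S finite_subset by blast
  qed
  define k where "k = (LEAST n::nat. ?z [^] n \<otimes> w \<notin> S)"
  have k_out: "?z [^] k \<otimes> w \<notin> S" unfolding k_def using ex by (rule LeastI_ex)
  have k_in: "\<And>i. i < k \<Longrightarrow> ?z [^] i \<otimes> w \<in> S" unfolding k_def using not_less_Least by blast
  have k_pos: "0 < k" using k_out S w by (cases k) auto
  define D where "D = {?z [^] i \<otimes> w | i. i < k}"
  have DS: "D \<subseteq> S" using k_in D_def by auto
  have "S - D = {}"
  proof (rule ccontr)
    assume ne: "S - D \<noteq> {}"
    then obtain s0 where s0: "s0 \<in> S - D" by auto
    have "x = \<one>"
    proof (rule tf_translate[OF tf _ _ s0 x(1)])
      show "finite (S - D)" using S by auto
      show "S - D \<subseteq> carrier G" using S by auto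
      fix t assume t: "t \<in> S - D"
      have tne: "t \<noteq> w" using t k_pos D_def w by (auto intro!: exI[of _ 0])
      have tc: "t \<in> carrier G" using t S by auto
      have xt: "x \<otimes> t \<in> S" using cl t tne by auto
      have "x \<otimes> t \<notin> D"
      proof
        assume "x \<otimes> t \<in> D"
        then obtain i where i: "i < k" "x \<otimes> t = ?z [^] i \<otimes> w" using D_def by auto
        have "t = ?z \<otimes> (x \<otimes> t)" using tc x by (simp add: m_assoc[symmetric])
        also have "\<dots> = ?z [^] Suc i \<otimes> w" using i z w by (metis nat_pow_Suc2 m_assoc nat_pow_closed)
        finally have teq: "t = ?z [^] Suc i \<otimes> w" .
        show False
        proof (cases "Suc i < k")
          case True then show False using t teq D_def by auto
        next
          case False then have "Suc i = k" using i by simp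
          then show False using t teq k_out by auto
        qed
      qed
      thus "x \<otimes> t \<in> S - D" using xt by auto
    qed
    thus False using x by simp
  qed
  hence "S = D" using DS by auto
  thus ?thesis unfolding D_def by blast
qed

lemma tf_bottom:
  assumes tf: "torsion_free G" and e: "\<eta> \<in> carrier G" "\<eta> \<noteq> \<one>"
    and w: "w \<in> carrier G" and y: "y \<in> carrier G"
    and h1: "y \<otimes> w = \<eta> [^] (i::nat) \<otimes> w" and h2: "inv y \<otimes> w = \<eta> [^] (j::nat) \<otimes> w"
  shows "y = \<one>"
proof -
  have a: "y = \<eta> [^] i" using h1 w y e by simp
  have b: "inv y = \<eta> [^] j" using h2 w y e by simp
  have "\<eta> [^] (i + j) = y \<otimes> inv y" using a b e by (simp add: nat_pow_mult)
  hence "\<eta> [^] (i + j) = \<eta> [^] (0::nat)" using y by simp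
  hence "i + j = 0" using tf_pow_inj[OF tf e] by blast
  thus ?thesis using a by simp
qed

lemma tf_top:
  assumes tf: "torsion_free G" and e: "\<eta> \<in> carrier G" "\<eta> \<noteq> \<one>"
    and w: "w \<in> carrier G" and y: "y \<in> carrier G"
    and h1: "y \<otimes> (\<eta> [^] (m::nat) \<otimes> w) = \<eta> [^] (i::nat) \<otimes> w"
    and h2: "inv y \<otimes> (\<eta> [^] m \<otimes> w) = \<eta> [^] (j::nat) \<otimes> w"
    and ij: "i \<le> m" "j \<le> m"
  shows "y = \<one>"
proof -
  have m1: "\<eta> [^] m = \<eta> [^] (m - i) \<otimes> \<eta> [^] i" using ij e by (simp add: nat_pow_mult)
  have m2: "\<eta> [^] m = \<eta> [^] (m - j) \<otimes> \<eta> [^] j" using ij e by (simp add: nat_pow_mult)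
  have "(y \<otimes> \<eta> [^] (m - i)) \<otimes> (\<eta> [^] i \<otimes> w) = \<one> \<otimes> (\<eta> [^] i \<otimes> w)"
    using h1 m1 y e w by (simp add: m_assoc)
  hence a: "y \<otimes> \<eta> [^] (m - i) = \<one>" using y e w by (metis m_closed nat_pow_closed right_cancel one_closed)
  have "(inv y \<otimes> \<eta> [^] (m - j)) \<otimes> (\<eta> [^] j \<otimes> w) = \<one> \<otimes> (\<eta> [^] j \<otimes> w)"
    using h2 m2 y e w by (simp add: m_assoc)
  hence b: "inv y \<otimes> \<eta> [^] (m - j) = \<one>" using y e w by (metis inv_closed m_closed nat_pow_closed right_cancel one_closed)
  have "y = \<eta> [^] (m - j)" using b y e
    by (metis inv_closed inv_equality inv_inv nat_pow_closed)
  hence "\<eta> [^] ((m - j) + (m - i)) = \<eta> [^] (0::nat)" using a e by (simp add: nat_pow_mult[symmetric])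
  hence "(m - j) + (m - i) = 0" using tf_pow_inj[OF tf e] by blast
  hence "y = \<eta> [^] (0::nat)" using \<open>y = \<eta> [^] (m - j)\<close> by simp
  thus ?thesis by simp
qed

end


context group begin

lemma main_bound:
  fixes b :: "'a \<Rightarrow> 'f::field" and \<alpha> \<beta> \<gamma> \<delta> :: 'f
  assumes tf: "torsion_free G" and x: "x \<in> carrier G" "x \<noteq> \<one>" and y: "y \<in> carrier G" "y \<noteq> \<one>"
    and Bdef: "B = {g \<in> carrier G. b g \<noteq> 0}" and fin: "finite B" and Bne: "B \<noteq> {}"
    and nz: "\<alpha> \<noteq> 0" "\<beta> \<noteq> 0" "\<gamma> \<noteq> 0" "\<delta> \<noteq> 0" and det: "\<alpha> * \<delta> \<noteq> \<beta> * \<gamma>"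
    and eqn: "\<And>g. g \<in> carrier G \<Longrightarrow> (\<alpha> * b g + \<gamma> * b (inv y \<otimes> g)) +
        (\<beta> * b (inv x \<otimes> g) + \<delta> * b (inv y \<otimes> (inv x \<otimes> g))) = (if g = \<one> then 1 else 0)"
  shows "card ((B \<union> (\<lambda>t. y \<otimes> t) ` B) \<union> (\<lambda>t. x \<otimes> t) ` (B \<union> (\<lambda>t. y \<otimes> t) ` B)) \<le> 2 * card B - 1"
proof -
  define c where "c g = \<alpha> * b g + \<gamma> * b (inv y \<otimes> g)" for g
  define d where "d g = \<beta> * b g + \<delta> * b (inv y \<otimes> g)" for g
  define C where "C = {g \<in> carrier G. b g \<noteq> 0 \<or> b (inv y \<otimes> g) \<noteq> 0}"
  define C2 where "C2 = {g \<in> carrier G. b g \<noteq> 0 \<and> b (inv y \<otimes> g) \<noteq> 0}"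
  define C1 where "C1 = C - C2"
  define Sc where "Sc = {g \<in> carrier G. c g \<noteq> 0}"
  define Sd where "Sd = {g \<in> carrier G. d g \<noteq> 0}"
  define xC where "xC = (\<lambda>t. x \<otimes> t) ` C"
  define T where "T = Sc \<union> (\<lambda>t. x \<otimes> t) ` Sd"
  let ?z = "inv x"
  have zc: "?z \<in> carrier G" "?z \<noteq> \<one>" using x tf_inv_ne_one by auto
  have yB: "(\<lambda>t. y \<otimes> t) ` B = {g \<in> carrier G. b (inv y \<otimes> g) \<noteq> 0}"
  proof (intro equalityI subsetI)
    fix g assume "g \<in> (\<lambda>t. y \<otimes> t) ` B"
    then obtain t where t: "t \<in> B" "g = y \<otimes> t" by auto
    have "inv y \<otimes> g = t" using t y Bdef by (simp add: m_assoc[symmetric])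
    thus "g \<in> {g \<in> carrier G. b (inv y \<otimes> g) \<noteq> 0}" using t y Bdef by auto
  next
    fix g assume g: "g \<in> {g \<in> carrier G. b (inv y \<otimes> g) \<noteq> 0}"
    have "g = y \<otimes> (inv y \<otimes> g)" using g y by (simp add: m_assoc[symmetric])
    moreover have "inv y \<otimes> g \<in> B" using g y Bdef by auto
    ultimately show "g \<in> (\<lambda>t. y \<otimes> t) ` B" by blast
  qed
  have Ceq: "C = B \<union> (\<lambda>t. y \<otimes> t) ` B" unfolding C_def yB by (auto simp: Bdef)
  have C2eq: "C2 = B \<inter> (\<lambda>t. y \<otimes> t) ` B" unfolding C2_def yB by (auto simp: Bdef)
  have Bc: "B \<subseteq> carrier G" using Bdef by auto
  have injy: "inj_on (\<lambda>t. y \<otimes> t) B" using y Bc by (intro inj_onI) (metis subsetD lcan)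
  have cardyB: "card ((\<lambda>t. y \<otimes> t) ` B) = card B" using card_image[OF injy] .
  have finC: "finite C" using Ceq fin by auto
  have Cc: "C \<subseteq> carrier G" unfolding C_def by auto
  have cardCC2: "card C + card C2 = 2 * card B"
    using card_Un_Int[of B "(\<lambda>t. y \<otimes> t) ` B"] fin cardyB Ceq C2eq by auto
  have C2C: "C2 \<subseteq> C" unfolding C2_def C_def by auto
  have cardC1: "card C1 = card C - card C2" unfolding C1_def using C2C finC
    by (simp add: card_Diff_subset finite_subset)
  have injx: "inj_on (\<lambda>t. x \<otimes> t) C" using x Cc by (intro inj_onI) (metis subsetD lcan)
  have cardxC: "card xC = card C" unfolding xC_def using card_image[OF injx] .
  have finxC: "finite xC" unfolding xC_def using finC by auto
  have cardU: "card (C \<union> xC) + card (C \<inter> xC) = 2 * card C"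
    using card_Un_Int[OF finC finxC] cardxC by simp
  have ScC: "Sc \<subseteq> C" unfolding Sc_def C_def c_def by auto
  have SdC: "Sd \<subseteq> C" unfolding Sd_def C_def d_def by auto
  have CS: "C \<subseteq> Sc \<union> Sd"
  proof
    fix g assume g: "g \<in> C"
    show "g \<in> Sc \<union> Sd"
    proof (rule ccontr)
      assume "g \<notin> Sc \<union> Sd"
      hence h: "\<alpha> * b g + \<gamma> * b (inv y \<otimes> g) = 0" "\<beta> * b g + \<delta> * b (inv y \<otimes> g) = 0"
        using g Cc unfolding Sc_def Sd_def c_def d_def by auto
      have "(\<alpha> * \<delta> - \<beta> * \<gamma>) * b g = \<delta> * (\<alpha> * b g + \<gamma> * b (inv y \<otimes> g)) - \<gamma> * (\<beta> * b g + \<delta> * b (inv y \<otimes> g))"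
        by (simp add: algebra_simps)
      hence 1: "b g = 0" using h det by simp
      have "(\<alpha> * \<delta> - \<beta> * \<gamma>) * b (inv y \<otimes> g) = \<alpha> * (\<beta> * b g + \<delta> * b (inv y \<otimes> g)) - \<beta> * (\<alpha> * b g + \<gamma> * b (inv y \<otimes> g))"
        by (simp add: algebra_simps)
      hence 2: "b (inv y \<otimes> g) = 0" using h det by simp
      show False using 1 2 g unfolding C_def by auto
    qed
  qed
  have C1S: "C1 \<subseteq> Sc \<inter> Sd"
    unfolding C1_def C_def C2_def Sc_def Sd_def c_def d_def using nz by auto
  have rel1: "\<And>g. g \<in> carrier G \<Longrightarrow> g \<noteq> \<one> \<Longrightarrow> c g = - d (inv x \<otimes> g)"
  proof -
    fix g assume g: "g \<in> carrier G" "g \<noteq> \<one>"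
    have "c g + d (inv x \<otimes> g) = 0" using eqn[OF g(1)] g unfolding c_def d_def by simp
    thus "c g = - d (inv x \<otimes> g)" by (simp add: eq_neg_iff_add_eq_0)
  qed
  have rel0: "c \<one> + d (inv x) = 1" using eqn[of \<one>] x unfolding c_def d_def by simp
  have oneT: "\<one> \<in> T"
  proof (cases "c \<one> = 0")
    case True
    hence "d (inv x) \<noteq> 0" using rel0 by auto
    hence "inv x \<in> Sd" unfolding Sd_def using x by auto
    moreover have "x \<otimes> inv x = \<one>" using x by simp
    ultimately show ?thesis unfolding T_def by (metis UnI2 image_eqI)
  next
    case False thus ?thesis unfolding T_def Sc_def by auto
  qed
  have Tsub: "\<And>g. g \<in> T \<Longrightarrow> g \<noteq> \<one> \<Longrightarrow> g \<in> C \<inter> xC"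
  proof -
    fix g assume gT: "g \<in> T" and g1: "g \<noteq> \<one>"
    show "g \<in> C \<inter> xC"
    proof (cases "g \<in> Sc")
      case True
      hence gc: "g \<in> carrier G" "c g \<noteq> 0" unfolding Sc_def by auto
      hence "d (inv x \<otimes> g) \<noteq> 0" using rel1[OF gc(1) g1] by auto
      hence "inv x \<otimes> g \<in> Sd" unfolding Sd_def using gc x by auto
      hence "inv x \<otimes> g \<in> C" using SdC by auto
      moreover have "g = x \<otimes> (inv x \<otimes> g)" using gc x by (simp add: m_assoc[symmetric])
      ultimately have "g \<in> xC" unfolding xC_def by blast
      thus ?thesis using True ScC by auto
    next
      case False
      then obtain h where h: "h \<in> Sd" "g = x \<otimes> h" using gT unfolding T_def by auto
      have hc: "h \<in> carrier G" "d h \<noteq> 0" using h unfolding Sd_def by auto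
      have gc: "g \<in> carrier G" using h hc x by auto
      have "inv x \<otimes> g = h" using h hc x by (simp add: m_assoc[symmetric])
      hence "c g \<noteq> 0" using rel1[OF gc g1] hc by auto
      hence "g \<in> C" using ScC gc unfolding Sc_def by auto
      moreover have "g \<in> xC" using h SdC unfolding xC_def by auto
      ultimately show ?thesis by auto
    qed
  qed
  have finSc: "finite Sc" using ScC finC finite_subset by auto
  have finSd: "finite Sd" using SdC finC finite_subset by auto
  have finT: "finite T" unfolding T_def using finSc finSd by auto
  have finC1: "finite C1" unfolding C1_def using finC by auto
  have C1c: "C1 \<subseteq> carrier G" unfolding C1_def using Cc by auto
  have C1ne: "C1 \<noteq> {}"
  proof
    assume e: "C1 = {}"
    obtain t0 where t0: "t0 \<in> B" using Bne by auto
    have "y = \<one>"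
    proof (rule tf_translate[OF tf fin Bc t0 y(1)])
      fix t assume t: "t \<in> B"
      have yt: "y \<otimes> t \<in> C" using t Ceq by auto
      hence "y \<otimes> t \<in> C2" using e unfolding C1_def by auto
      thus "y \<otimes> t \<in> B" unfolding C2_def Bdef by auto
    qed
    thus False using y by simp
  qed
  obtain p0 where p0: "p0 \<in> C1" using C1ne by auto
  obtain p where p: "p \<in> C1" "x \<otimes> p \<notin> C1"
  proof -
    have "\<not> (\<forall>t\<in>C1. x \<otimes> t \<in> C1)"
    proof
      assume "\<forall>t\<in>C1. x \<otimes> t \<in> C1"
      hence "x = \<one>" using tf_translate[OF tf finC1 C1c p0 x(1)] by blast
      thus False using x by simp
    qed
    thus ?thesis using that by blast
  qed
  have pc: "p \<in> carrier G" using p C1c by auto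
  define K0 where "K0 = insert (x \<otimes> p) C1"
  have K0T: "K0 \<subseteq> T" unfolding K0_def T_def using C1S p by auto
  have cardK0: "card K0 = card C1 + 1" unfolding K0_def using p finC1 by simp
  have key: "card C1 + 1 \<le> card (C \<inter> xC)"
  proof (cases "\<one> \<in> C \<inter> xC")
    case True
    have "T \<subseteq> C \<inter> xC" using Tsub True by blast
    hence "K0 \<subseteq> C \<inter> xC" using K0T by auto
    thus ?thesis using cardK0 card_mono[of "C \<inter> xC" K0] finC by auto
  next
    case one_out: False
    show ?thesis
    proof (cases "card C1 + 2 \<le> card T")
      case True
      have "T - {\<one>} \<subseteq> C \<inter> xC" using Tsub by blast
      hence "card (T - {\<one>}) \<le> card (C \<inter> xC)" using card_mono[of "C \<inter> xC"] finC by auto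
      moreover have "card (T - {\<one>}) = card T - 1" using oneT finT by simp
      ultimately show ?thesis using True by simp
    next
      case False
      have "card K0 \<le> card T" by (rule card_mono[OF finT K0T])
      hence "card K0 = card T" using False cardK0 by simp
      hence TK: "T = K0" using card_subset_eq[OF finT K0T] by simp
      have "\<exists>k::nat. C1 = {?z [^] (i::nat) \<otimes> p | i. i < k}"
      proof (rule tf_walk[OF tf finC1 C1c p(1) x])
        fix s assume s: "s \<in> C1" "s \<noteq> p"
        have "x \<otimes> s \<in> T" unfolding T_def using s C1S by auto
        moreover have "x \<otimes> s \<noteq> x \<otimes> p" using s pc x C1c by auto
        ultimately show "x \<otimes> s \<in> C1" using TK unfolding K0_def by auto
      qed
      then obtain k :: nat where k: "C1 = {?z [^] (i::nat) \<otimes> p | i. i < k}" by blast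
      define w where "w = x \<otimes> p"
      have wc: "w \<in> carrier G" unfolding w_def using x pc by auto
      have pw: "p = ?z \<otimes> w" unfolding w_def using x pc by (simp add: m_assoc[symmetric])
      have zpow: "\<And>i. ?z [^] (i::nat) \<otimes> p = ?z [^] (Suc i) \<otimes> w"
        using pw zc wc by (metis nat_pow_Suc m_assoc nat_pow_closed)
      have k1: "C1 = {?z [^] (Suc i) \<otimes> w | i. i < k}" using k zpow by auto
      have kpos: "0 < k" using p(1) k by auto
      have K0eq: "T = insert w C1" using TK unfolding K0_def w_def .
      have Csub: "\<And>g. g \<in> C \<Longrightarrow> \<exists>i\<le>Suc k. g = ?z [^] (i::nat) \<otimes> w"
      proof -
        fix g assume g: "g \<in> C"
        have gc: "g \<in> carrier G" using g Cc by auto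
        show "\<exists>i\<le>Suc k. g = ?z [^] (i::nat) \<otimes> w"
        proof (cases "g \<in> Sc")
          case True
          hence "g \<in> insert w C1" using K0eq unfolding T_def by auto
          then show ?thesis
          proof
            assume "g = w" thus ?thesis using wc by (intro exI[of _ 0]) auto
          next
            assume "g \<in> C1"
            then obtain i where "i < k" "g = ?z [^] (Suc i) \<otimes> w" using k1 by auto
            thus ?thesis by (intro exI[of _ "Suc i"]) auto
          qed
        next
          case False
          hence gd: "g \<in> Sd" using g CS by auto
          have "x \<otimes> g \<in> insert w C1" using K0eq gd unfolding T_def by auto
          then show ?thesis
          proof
            assume "x \<otimes> g = w"
            hence "g = ?z [^] (1::nat) \<otimes> w" using gc x wc inv_solve_left[of g x w] by simp
            thus ?thesis by (intro exI[of _ 1]) auto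
          next
            assume "x \<otimes> g \<in> C1"
            then obtain i where i: "i < k" "x \<otimes> g = ?z [^] (Suc i) \<otimes> w" using k1 by auto
            have "g = ?z \<otimes> (x \<otimes> g)" using gc x by (simp add: m_assoc[symmetric])
            also have "\<dots> = ?z [^] (Suc (Suc i)) \<otimes> w" using i zc wc
              by (metis nat_pow_Suc2 m_assoc nat_pow_closed)
            finally show ?thesis using i by (intro exI[of _ "Suc (Suc i)"]) auto
          qed
        qed
      qed
      have nbr: "\<And>e. e \<in> C2 \<Longrightarrow> y \<otimes> e \<in> C \<and> inv y \<otimes> e \<in> C"
      proof -
        fix e assume e: "e \<in> C2"
        have ec: "e \<in> carrier G" using e unfolding C2_def by auto
        have "inv y \<otimes> (y \<otimes> e) = e" using ec y by (simp add: m_assoc[symmetric])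
        hence "y \<otimes> e \<in> C" using e y ec unfolding C2_def C_def by auto
        moreover have "inv y \<otimes> e \<in> C" using e y ec unfolding C2_def C_def by auto
        ultimately show "y \<otimes> e \<in> C \<and> inv y \<otimes> e \<in> C" by auto
      qed
      show ?thesis
      proof (cases "\<one> \<in> C")
        case True
        hence "\<one> \<notin> xC" using one_out by auto
        hence zC: "?z \<notin> C" unfolding xC_def using x by (metis image_eqI r_inv)
        have w1: "w \<noteq> \<one>"
        proof
          assume "w = \<one>"
          hence "p = ?z" using pw zc by simp
          thus False using p C1_def zC by auto
        qed
        have "w \<in> C" using Tsub[OF _ w1] K0eq by auto
        moreover have "w \<notin> C1" using p unfolding w_def by auto
        ultimately have wC2: "w \<in> C2" unfolding C1_def by auto
        obtain i where i: "y \<otimes> w = ?z [^] (i::nat) \<otimes> w" using Csub nbr[OF wC2] by blast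
        obtain j where j: "inv y \<otimes> w = ?z [^] (j::nat) \<otimes> w" using Csub nbr[OF wC2] by blast
        have "y = \<one>" using tf_bottom[OF tf zc wc y(1) i j] .
        thus ?thesis using y by simp
      next
        case False
        have "\<one> \<notin> C1" using False unfolding C1_def by auto
        hence w1: "w = \<one>" using oneT K0eq by auto
        define f where "f = ?z [^] (Suc (k - 1)) \<otimes> w"
        have "k - 1 < k" using kpos by simp
        hence fC1: "f \<in> C1" unfolding f_def k1 by blast
        have fc: "f \<in> carrier G" using fC1 C1c by auto
        have f1: "f \<noteq> \<one>" using fC1 False unfolding C1_def by auto
        have "c f \<noteq> 0" using fC1 C1S unfolding Sc_def by auto
        hence "d (?z \<otimes> f) \<noteq> 0" using rel1[OF fc f1] by auto
        hence "?z \<otimes> f \<in> Sd" unfolding Sd_def using zc fc by auto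
        hence eC: "?z \<otimes> f \<in> C" using SdC by auto
        have sk: "Suc (k - 1) = k" using kpos by simp
        have "?z \<otimes> f = ?z \<otimes> (?z [^] k \<otimes> w)" unfolding f_def by (simp only: sk)
        also have "\<dots> = ?z [^] (Suc k) \<otimes> w" using zc wc by (metis nat_pow_Suc2 m_assoc nat_pow_closed)
        finally have eeq: "?z \<otimes> f = ?z [^] (Suc k) \<otimes> w" .
        have "?z [^] (Suc k) \<otimes> w \<notin> C1"
        proof
          assume "?z [^] (Suc k) \<otimes> w \<in> C1"
          then obtain i where i: "i < k" "?z [^] (Suc k) \<otimes> w = ?z [^] (Suc i) \<otimes> w" using k1 by auto
          hence "?z [^] (Suc k) = ?z [^] (Suc i)" using zc wc by simp
          hence "Suc k = Suc i" using tf_pow_inj[OF tf zc] by blast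
          thus False using i by simp
        qed
        hence eC2: "?z [^] (Suc k) \<otimes> w \<in> C2" using eC eeq unfolding C1_def by auto
        obtain i where i: "i \<le> Suc k" "y \<otimes> (?z [^] (Suc k) \<otimes> w) = ?z [^] (i::nat) \<otimes> w"
          using Csub nbr[OF eC2] by blast
        obtain j where j: "j \<le> Suc k" "inv y \<otimes> (?z [^] (Suc k) \<otimes> w) = ?z [^] (j::nat) \<otimes> w"
          using Csub nbr[OF eC2] by blast
        have "y = \<one>" using tf_top[OF tf zc wc y(1) i(2) j(2) i(1) j(1)] .
        thus ?thesis using y by simp
      qed
    qed
  qed
  have "card (C \<union> xC) \<le> 2 * card B - 1" using cardU cardCC2 cardC1 key C2C finC card_mono[OF finC C2C]
    by linarith
  thus ?thesis unfolding xC_def Ceq .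
qed

end


context group begin

lemma det_zero_false:
  fixes b :: "'a \<Rightarrow> 'f::field" and \<alpha> \<beta> \<gamma> \<delta> :: 'f
  assumes tf: "torsion_free G" and x: "x \<in> carrier G" "x \<noteq> \<one>" and y: "y \<in> carrier G"
    and Bdef: "B = {g \<in> carrier G. b g \<noteq> 0}" and fin: "finite B"
    and nz: "\<alpha> \<noteq> 0" "\<beta> \<noteq> 0" and det: "\<alpha> * \<delta> = \<beta> * \<gamma>"
    and eqn: "\<And>g. g \<in> carrier G \<Longrightarrow> (\<alpha> * b g + \<gamma> * b (inv y \<otimes> g)) +
        (\<beta> * b (inv x \<otimes> g) + \<delta> * b (inv y \<otimes> (inv x \<otimes> g))) = (if g = \<one> then 1 else 0)"
  shows False
proof -
  define e where "e g = b g + (\<gamma> / \<alpha>) * b (inv y \<otimes> g)" for g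
  have dl: "\<delta> = \<beta> * \<gamma> / \<alpha>" using det nz by (simp add: field_simps)
  have eq2: "\<And>g. g \<in> carrier G \<Longrightarrow> \<alpha> * e g + \<beta> * e (inv x \<otimes> g) = (if g = \<one> then 1 else 0)"
  proof -
    fix g assume g: "g \<in> carrier G"
    have "\<alpha> * e g + \<beta> * e (inv x \<otimes> g) = (\<alpha> * b g + \<gamma> * b (inv y \<otimes> g)) +
        (\<beta> * b (inv x \<otimes> g) + \<delta> * b (inv y \<otimes> (inv x \<otimes> g)))"
      unfolding e_def dl using nz by (simp add: field_simps)
    thus "\<alpha> * e g + \<beta> * e (inv x \<otimes> g) = (if g = \<one> then 1 else 0)" using eqn[OF g] by simp
  qed
  define E where "E = {g \<in> carrier G. e g \<noteq> 0}"
  have Ec: "E \<subseteq> carrier G" unfolding E_def by auto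
  have "E \<subseteq> B \<union> (\<lambda>t. y \<otimes> t) ` B"
  proof
    fix g assume g: "g \<in> E"
    hence gc: "g \<in> carrier G" and "b g \<noteq> 0 \<or> b (inv y \<otimes> g) \<noteq> 0" unfolding E_def e_def by auto
    moreover have "g = y \<otimes> (inv y \<otimes> g)" using gc y by (simp add: m_assoc[symmetric])
    ultimately show "g \<in> B \<union> (\<lambda>t. y \<otimes> t) ` B" using Bdef y by (auto intro: image_eqI)
  qed
  hence finE: "finite E" using fin finite_subset by auto
  show False
  proof (cases "E = {}")
    case True
    have "e \<one> = 0" "e (inv x) = 0" using True x unfolding E_def by auto
    thus False using eq2[of \<one>] x by simp
  next
    case False
    then obtain s where s: "s \<in> E" by auto
    obtain p where p: "p \<in> E" "x \<otimes> p \<notin> E"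
    proof -
      have "\<not> (\<forall>t\<in>E. x \<otimes> t \<in> E)"
      proof
        assume "\<forall>t\<in>E. x \<otimes> t \<in> E"
        hence "x = \<one>" using tf_translate[OF tf finE Ec s x(1)] by blast
        thus False using x by simp
      qed
      thus ?thesis using that by blast
    qed
    have zc: "inv x \<in> carrier G" "inv x \<noteq> \<one>" using x tf_inv_ne_one by auto
    obtain q where q: "q \<in> E" "inv x \<otimes> q \<notin> E"
    proof -
      have "\<not> (\<forall>t\<in>E. inv x \<otimes> t \<in> E)"
      proof
        assume "\<forall>t\<in>E. inv x \<otimes> t \<in> E"
        hence "inv x = \<one>" using tf_translate[OF tf finE Ec s zc(1)] by blast
        thus False using zc by simp
      qed
      thus ?thesis using that by blast
    qed
    have pc: "p \<in> carrier G" "e p \<noteq> 0" using p unfolding E_def by auto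
    have xpc: "x \<otimes> p \<in> carrier G" using pc x by auto
    have "inv x \<otimes> (x \<otimes> p) = p" using x pc by (simp add: m_assoc[symmetric])
    hence "\<alpha> * e (x \<otimes> p) + \<beta> * e p = (if x \<otimes> p = \<one> then 1 else 0)" using eq2[OF xpc] by simp
    moreover have "e (x \<otimes> p) = 0" using p xpc unfolding E_def by auto
    ultimately have xp1: "x \<otimes> p = \<one>" using pc nz by (auto split: if_splits)
    have qc: "q \<in> carrier G" "e q \<noteq> 0" using q unfolding E_def by auto
    have "e (inv x \<otimes> q) = 0" using q qc x unfolding E_def by auto
    hence "\<alpha> * e q = (if q = \<one> then 1 else 0)" using eq2[OF qc(1)] by simp
    hence "q = \<one>" using qc nz by (auto split: if_splits)
    thus False using q p xp1 by simp
  qed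
qed

lemma counting:
  fixes a b :: "'a \<Rightarrow> 'f::field"
  assumes Adef: "A = {u \<in> carrier G. a u \<noteq> 0}" and finA: "finite A"
    and Bdef: "B = {u \<in> carrier G. b u \<noteq> 0}" and finB: "finite B"
    and prod: "\<And>z. z \<in> carrier G \<Longrightarrow> (\<Sum>u\<in>A. a u * b (inv u \<otimes> z)) = (if z = \<one> then 1 else 0)"
  shows "2 * card (A <#> B) \<le> card A * card B + 1"
proof -
  define AB where "AB = A <#> B"
  define R where "R z = {u \<in> A. inv u \<otimes> z \<in> B}" for z
  have Ac: "A \<subseteq> carrier G" and Bc: "B \<subseteq> carrier G" using Adef Bdef by auto
  have ABeq: "AB = (\<lambda>(u,t). u \<otimes> t) ` (A \<times> B)" unfolding AB_def set_mult_def by auto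
  have finAB: "finite AB" unfolding ABeq using finA finB by auto
  have ABc: "AB \<subseteq> carrier G" unfolding ABeq using Ac Bc by auto
  have finR: "\<And>z. finite (R z)" unfolding R_def using finA by auto
  have sig: "card (Sigma AB R) = (\<Sum>z\<in>AB. card (R z))" using card_SigmaI[OF finAB] finR by auto
  have "Sigma AB R = (\<lambda>(u,t). (u \<otimes> t, u)) ` (A \<times> B)"
  proof (intro equalityI subsetI)
    fix zu assume "zu \<in> Sigma AB R"
    then obtain z u where zu: "zu = (z, u)" "z \<in> AB" "u \<in> A" "inv u \<otimes> z \<in> B" unfolding R_def by auto
    have uzc: "u \<in> carrier G" "z \<in> carrier G" using zu Ac ABc by auto
    have "z = u \<otimes> (inv u \<otimes> z)" using uzc by (simp add: m_assoc[symmetric])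
    thus "zu \<in> (\<lambda>(u,t). (u \<otimes> t, u)) ` (A \<times> B)" using zu by (auto intro!: image_eqI[of _ _ "(u, inv u \<otimes> z)"])
  next
    fix zu assume "zu \<in> (\<lambda>(u,t). (u \<otimes> t, u)) ` (A \<times> B)"
    then obtain u t where ut: "zu = (u \<otimes> t, u)" "u \<in> A" "t \<in> B" by auto
    have utc: "u \<in> carrier G" "t \<in> carrier G" using ut Ac Bc by auto
    have "inv u \<otimes> (u \<otimes> t) = t" using utc by (simp add: m_assoc[symmetric])
    moreover have "u \<otimes> t \<in> AB" using ut unfolding ABeq by auto
    ultimately show "zu \<in> Sigma AB R" using ut unfolding R_def by auto
  qed
  moreover have "inj_on (\<lambda>(u,t). (u \<otimes> t, u)) (A \<times> B)"
  proof (rule inj_onI)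
    fix p q assume h: "p \<in> A \<times> B" "q \<in> A \<times> B" "(\<lambda>(u,t). (u \<otimes> t, u)) p = (\<lambda>(u,t). (u \<otimes> t, u)) q"
    obtain u t where p: "p = (u, t)" by (cases p)
    obtain u' t' where q: "q = (u', t')" by (cases q)
    have c: "u \<in> carrier G" "t \<in> carrier G" "t' \<in> carrier G" using h p q Ac Bc by auto
    have "u = u'" "u \<otimes> t = u' \<otimes> t'" using h p q by auto
    hence "t = t'" using c lcan by blast
    thus "p = q" using p q \<open>u = u'\<close> by simp
  qed
  ultimately have "card (Sigma AB R) = card A * card B"
    using card_image[of "\<lambda>(u,t). (u \<otimes> t, u)" "A \<times> B"] card_cartesian_product[of A B] by simp
  hence total: "(\<Sum>z\<in>AB. card (R z)) = card A * card B" using sig by simp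
  have lb: "\<And>z. z \<in> AB \<Longrightarrow> (if z = \<one> then 1 else 2) \<le> card (R z)"
  proof -
    fix z assume z: "z \<in> AB"
    then obtain u t where ut: "u \<in> A" "t \<in> B" "z = u \<otimes> t" unfolding ABeq by auto
    have utc: "u \<in> carrier G" "t \<in> carrier G" using ut Ac Bc by auto
    have "inv u \<otimes> z = t" using utc ut(3) by (simp add: m_assoc[symmetric])
    hence uR: "u \<in> R z" using ut unfolding R_def by auto
    hence ne: "R z \<noteq> {}" by auto
    have zc: "z \<in> carrier G" using z ABc by auto
    show "(if z = \<one> then 1 else 2) \<le> card (R z)"
    proof (cases "z = \<one>")
      case True thus ?thesis using ne finR by (simp add: Suc_le_eq card_gt_0_iff)
    next
      case False
      show ?thesis
      proof (rule ccontr)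
        assume "\<not> ?thesis"
        hence "card (R z) \<le> 1" using False by simp
        hence "\<forall>a1\<in>R z. \<forall>a2\<in>R z. a1 = a2" using card_le_Suc0_iff_eq[OF finR[of z]] by simp
        hence "R z = {u}" using uR by blast
        have "(\<Sum>v\<in>A. a v * b (inv v \<otimes> z)) = (\<Sum>v\<in>R z. a v * b (inv v \<otimes> z))"
        proof (rule sum.mono_neutral_right[OF finA])
          show "R z \<subseteq> A" unfolding R_def by auto
          show "\<forall>v\<in>A - R z. a v * b (inv v \<otimes> z) = 0"
            using zc Ac unfolding R_def Bdef by auto
        qed
        also have "\<dots> = a u * b (inv u \<otimes> z)" using \<open>R z = {u}\<close> by simp
        also have "\<dots> \<noteq> 0" using uR unfolding R_def Adef Bdef by auto
        finally show False using prod[OF zc] False by simp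
      qed
    qed
  qed
  have "(\<Sum>z\<in>AB. (if z = \<one> then 1 else 2::nat)) \<le> card A * card B"
    using sum_mono[of AB "\<lambda>z. (if z = \<one> then 1 else 2::nat)" "\<lambda>z. card (R z)"] lb total by simp
  moreover have "(\<Sum>z\<in>AB. (2::nat)) = (\<Sum>z\<in>AB. (if z = \<one> then 1 else 2::nat)) + (\<Sum>z\<in>AB. (if z = \<one> then 1 else 0::nat))"
    by (simp only: sum.distrib[symmetric]) (rule sum.cong, auto)
  moreover have "(\<Sum>z\<in>AB. (if z = \<one> then 1 else 0::nat)) \<le> 1"
    using sum.delta[OF finAB, of \<one> "\<lambda>_. 1::nat"] by simp
  ultimately show ?thesis unfolding AB_def by simp
qed

end


context group begin

lemma main_in_group:
  fixes a b :: "'a \<Rightarrow> 'f::field"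
  assumes "torsion_free G"
    and "x \<in> carrier G" and "y \<in> carrier G"
    and "x \<noteq> y" and "x \<noteq> \<one>" and "y \<noteq> \<one>"
    and "supp G a = {\<one>, x, y, x \<otimes> y}"
    and "is_mate G a b"
  shows "card (supp G a <#> supp G b) \<le> 2 * card (supp G b) - 1"
proof -
  note tf = \<open>torsion_free G\<close>
  note xc = \<open>x \<in> carrier G\<close> and yc = \<open>y \<in> carrier G\<close>
  note x1 = \<open>x \<noteq> \<one>\<close> and y1 = \<open>y \<noteq> \<one>\<close> and xy = \<open>x \<noteq> y\<close>
  have bR: "b \<in> grp_ring G" and ab: "gr_mult G a b = gr_one G"
    using \<open>is_mate G a b\<close> unfolding is_mate_def by auto
  define A where "A = supp G a"
  define B where "B = supp G b"
  have Adef: "A = {u \<in> carrier G. a u \<noteq> 0}" unfolding A_def supp_def ..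
  have Bdef: "B = {u \<in> carrier G. b u \<noteq> 0}" unfolding B_def supp_def ..
  have Aeq: "A = {\<one>, x, y, x \<otimes> y}" unfolding A_def using assms(7) .
  have finA: "finite A" using Aeq by simp
  have finB: "finite B"
  proof -
    have "finite {z. b z \<noteq> 0}" using bR unfolding grp_ring_def by auto
    moreover have "B \<subseteq> {z. b z \<noteq> 0}" unfolding Bdef by auto
    ultimately show ?thesis using finite_subset by blast
  qed
  have prod: "\<And>z. z \<in> carrier G \<Longrightarrow> (\<Sum>u\<in>A. a u * b (inv u \<otimes> z)) = (if z = \<one> then 1 else 0)"
  proof -
    fix z assume z: "z \<in> carrier G"
    have "gr_mult G a b z = gr_one G z" using ab by simp
    thus "(\<Sum>u\<in>A. a u * b (inv u \<otimes> z)) = (if z = \<one> then 1 else 0)"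
      using z unfolding gr_mult_def gr_one_def A_def by simp
  qed
  have Bne: "B \<noteq> {}"
  proof
    assume B0: "B = {}"
    have "(\<Sum>u\<in>A. a u * b (inv u \<otimes> \<one>)) = 0"
    proof (rule sum.neutral, rule ballI)
      fix u assume "u \<in> A"
      hence "inv u \<otimes> \<one> \<in> carrier G" using Adef by auto
      hence "b (inv u \<otimes> \<one>) = 0" using B0 Bdef by auto
      thus "a u * b (inv u \<otimes> \<one>) = 0" by simp
    qed
    thus False using prod[of \<one>] by simp
  qed
  have ABeq: "A <#> B = (\<lambda>(u,t). u \<otimes> t) ` (A \<times> B)" unfolding set_mult_def by auto
  have finAB: "finite (A <#> B)" unfolding ABeq using finA finB by auto
  show ?thesis
  proof (cases "x \<otimes> y = \<one>")
    case True
    have A3: "A = {\<one>, x, y}" using Aeq True by auto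
    have cA: "card A = 3" using A3 x1 y1 xy by auto
    have cnt: "2 * card (A <#> B) \<le> card A * card B + 1"
      by (rule counting[OF Adef finA Bdef finB prod])
    obtain t where t: "t \<in> B" using Bne by auto
    have tc: "t \<in> carrier G" using t Bdef by auto
    have "(\<lambda>u. u \<otimes> t) ` A \<subseteq> A <#> B" unfolding ABeq using t by auto
    moreover have "inj_on (\<lambda>u. u \<otimes> t) A" using tc Adef by (intro inj_onI) auto
    ultimately have "card A \<le> card (A <#> B)"
      using card_mono[OF finAB] card_image by metis
    moreover have "2 * card (A <#> B) \<le> 3 * card B + 1" using cnt cA by simp
    ultimately have "card (A <#> B) \<le> 2 * card B - 1" using cA by presburger
    thus ?thesis unfolding A_def B_def .
  next
    case False
    define \<alpha> where "\<alpha> = a \<one>"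
    define \<beta> where "\<beta> = a x"
    define \<gamma> where "\<gamma> = a y"
    define \<delta> where "\<delta> = a (x \<otimes> y)"
    have nz: "\<alpha> \<noteq> 0" "\<beta> \<noteq> 0" "\<gamma> \<noteq> 0" "\<delta> \<noteq> 0"
      using Aeq Adef unfolding \<alpha>_def \<beta>_def \<gamma>_def \<delta>_def by blast+
    have d1: "\<one> \<noteq> x" "\<one> \<noteq> y" "\<one> \<noteq> x \<otimes> y" "x \<noteq> x \<otimes> y" "y \<noteq> x \<otimes> y"
      using x1 y1 False xc yc by auto
    have eqn: "\<And>g. g \<in> carrier G \<Longrightarrow> (\<alpha> * b g + \<gamma> * b (inv y \<otimes> g)) +
        (\<beta> * b (inv x \<otimes> g) + \<delta> * b (inv y \<otimes> (inv x \<otimes> g))) = (if g = \<one> then 1 else 0)"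
    proof -
      fix g assume g: "g \<in> carrier G"
      have "inv (x \<otimes> y) \<otimes> g = inv y \<otimes> (inv x \<otimes> g)" using xc yc g by (simp add: inv_mult_group m_assoc)
      hence "(\<Sum>u\<in>A. a u * b (inv u \<otimes> g)) = (\<alpha> * b g + \<gamma> * b (inv y \<otimes> g)) +
        (\<beta> * b (inv x \<otimes> g) + \<delta> * b (inv y \<otimes> (inv x \<otimes> g)))"
        using d1 xy g unfolding Aeq \<alpha>_def \<beta>_def \<gamma>_def \<delta>_def by (simp add: algebra_simps)
      thus "(\<alpha> * b g + \<gamma> * b (inv y \<otimes> g)) + (\<beta> * b (inv x \<otimes> g) + \<delta> * b (inv y \<otimes> (inv x \<otimes> g)))
          = (if g = \<one> then 1 else 0)" using prod[OF g] by simp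
    qed
    show ?thesis
    proof (cases "\<alpha> * \<delta> = \<beta> * \<gamma>")
      case True
      have False using det_zero_false[OF tf xc x1 yc Bdef finB nz(1) nz(2) True eqn] .
      thus ?thesis ..
    next
      case det: False
      have mb: "card ((B \<union> (\<lambda>t. y \<otimes> t) ` B) \<union> (\<lambda>t. x \<otimes> t) ` (B \<union> (\<lambda>t. y \<otimes> t) ` B)) \<le> 2 * card B - 1"
        by (rule main_bound[OF tf xc x1 yc y1 Bdef finB Bne nz det eqn])
      have Bc: "B \<subseteq> carrier G" using Bdef by auto
      have "A <#> B = (B \<union> (\<lambda>t. y \<otimes> t) ` B) \<union> (\<lambda>t. x \<otimes> t) ` (B \<union> (\<lambda>t. y \<otimes> t) ` B)"
      proof (intro equalityI subsetI)
        fix g assume "g \<in> A <#> B"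
        then obtain u t where ut: "u \<in> A" "t \<in> B" "g = u \<otimes> t" unfolding ABeq by auto
        have tc: "t \<in> carrier G" using ut Bc by auto
        have "u = \<one> \<or> u = x \<or> u = y \<or> u = x \<otimes> y" using ut Aeq by auto
        thus "g \<in> (B \<union> (\<lambda>t. y \<otimes> t) ` B) \<union> (\<lambda>t. x \<otimes> t) ` (B \<union> (\<lambda>t. y \<otimes> t) ` B)"
          using ut tc xc yc by (auto simp: m_assoc)
      next
        fix g assume g: "g \<in> (B \<union> (\<lambda>t. y \<otimes> t) ` B) \<union> (\<lambda>t. x \<otimes> t) ` (B \<union> (\<lambda>t. y \<otimes> t) ` B)"
        have mem: "\<And>u t. u \<in> A \<Longrightarrow> t \<in> B \<Longrightarrow> u \<otimes> t \<in> A <#> B" unfolding ABeq by auto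
        have in1: "\<one> \<in> A" "x \<in> A" "y \<in> A" "x \<otimes> y \<in> A" using Aeq by auto
        have "g \<in> B \<or> (\<exists>t\<in>B. g = y \<otimes> t) \<or> (\<exists>t\<in>B. g = x \<otimes> t) \<or> (\<exists>t\<in>B. g = x \<otimes> (y \<otimes> t))"
          using g by auto
        thus "g \<in> A <#> B"
        proof (elim disjE bexE)
          assume "g \<in> B" thus ?thesis using mem[OF in1(1)] Bc by fastforce
        next
          fix t assume "t \<in> B" "g = y \<otimes> t" thus ?thesis using mem[OF in1(3)] by auto
        next
          fix t assume "t \<in> B" "g = x \<otimes> t" thus ?thesis using mem[OF in1(2)] by auto
        next
          fix t assume h: "t \<in> B" "g = x \<otimes> (y \<otimes> t)"
          hence "g = (x \<otimes> y) \<otimes> t" using xc yc Bc by (auto simp: m_assoc)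
          thus ?thesis using mem[OF in1(4) h(1)] by simp
        qed
      qed
      thus ?thesis using mb unfolding A_def B_def by simp
    qed
  qed
qed

end

theorem mainTheorem16:
  fixes G :: "('g, 'm) monoid_scheme" and a b :: "'g \<Rightarrow> 'f::field" and x y :: 'g
  assumes "group G" and "torsion_free G"
    and "gr_unit G a"
    and "x \<in> carrier G" and "y \<in> carrier G"
    and "x \<noteq> y" and "x \<noteq> \<one>\<^bsub>G\<^esub>" and "y \<noteq> \<one>\<^bsub>G\<^esub>"
    and "supp G a = {\<one>\<^bsub>G\<^esub>, x, y, x \<otimes>\<^bsub>G\<^esub> y}"
    and "is_mate G a b"
  shows "card (supp G a <#>\<^bsub>G\<^esub> supp G b) \<le> 2 * card (supp G b) - 1"
  using group.main_in_group[OF assms(1,2,4,5,6,7,8,9,10)] .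


end
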